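(* There is an absolute constant $c>0$ such that the following holds. Let $\mathsf{M}\ge 1$, $\mathsf{N}\ge 2$ and $\mathsf{T}$ be positive integers with $\mathsf{M}\mathsf{T}\ge \mathsf{N}-1$, and consider the online matrix completion model in which the noise variables are i.i.d. $\mathcal{N}(0,1)$ (so $\sigma^2=1$). Then for every online algorithm there exists a reward matrix $\mathbf{P}\in\mathbb{R}^{\mathsf{M}\times\mathsf{N}}$ of rank at most $1$ with $0\le \mathbf{P}_{ij}\le 1$ for all $(i,j)\in[\mathsf{M}]\times[\mathsf{N}]$ such that the algorithm's regret satisfies $\mathsf{Reg}(\mathsf{T})\ge c\sqrt{\mathsf{N}\mathsf{T}/\mathsf{M}}$.
   Context: Online matrix completion model: there are $\mathsf{M}$ users, $\mathsf{N}$ items and $\mathsf{T}$ rounds, and an unknown reward matrix $\mathbf{P}\in\mathbb{R}^{\mathsf{M}\times\mathsf{N}}$. In each round $t\in[\mathsf{T}]$ an online algorithm selects, for every user $u\in[\mathsf{M}]$, an item $\rho_u(t)\in[\mathsf{N}]$ (possibly at random, and depending only on rewards observed in earlier rounds), and observes $\mathbf{R}^{(t)}_{u\rho_u(t)}=\mathbf{P}_{u\rho_u(t)}+\mathbf{E}^{(t)}_{u\rho_u(t)}$, where the noise variables $\mathbf{E}^{(t)}_{u\rho_u(t)}$, $u\in[\mathsf{M}],t\in[\mathsf{T}]$, are independent, zero-mean and sub-Gaussian with variance proxy $\sigma^2$, i.e. $\mathbb{E}[\exp(s\mathbf{E})]\le\exp(\sigma^2 s^2/2)$ for all $s\in\mathbb{R}$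 (fresh noise at each recommendation, even if an item is recommended repeatedly). Let $\mu^\star_u=\max_{j\in[\mathsf{N}]}\mathbf{P}_{uj}$. The regret is $\mathsf{Reg}(\mathsf{T})=\frac{\mathsf{T}}{\mathsf{M}}\sum_{u\in[\mathsf{M}]}\mu^\star_u-\mathbb{E}\big[\sum_{t\in[\mathsf{T}]}\frac{1}{\mathsf{M}}\sum_{u\in[\mathsf{M}]}\mathbf{R}^{(t)}_{u\rho_u(t)}\big]$, the expectation being over the noise and the algorithm's randomness. *)

theory Defs
  imports "HOL-Probability.Probability" "Jordan_Normal_Form.DL_Rank"
begin

(* Indices: users u < M, items j < N, rounds t < T (0-based).
   Reward matrix P :: nat => nat => real, only entries u<M, j<N matter.

   Noise: one fresh N(0,1) variable Z(t,u) per recommendation (round t, user u);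
   each user receives exactly one recommendation per round, so this is exactly
   the "fresh noise at each recommendation" model. *)

definition noise_space :: "nat \<Rightarrow> nat \<Rightarrow> (nat \<times> nat \<Rightarrow> real) measure" where
  "noise_space T M = PiM ({..<T} \<times> {..<M}) (\<lambda>_. std_normal_distribution)"

(* Online algorithm: alg t r Y u = item recommended to user u in round t, given the
   internal random seed r (drawn from an arbitrary probability distribution S on the
   reals) and the matrix Y of rewards observed in earlier rounds (Y s u for s < t).
   Earlier recommendations are deterministic functions of r and earlier observations,
   so they need not be passed separately. *)

type_synonym algorithm = "nat \<Rightarrow> real \<Rightarrow> (nat \<Rightarrow> nat \<Rightarrow> real) \<Rightarrow> nat \<Rightarrow> nat"

definition obs_space :: "(nat \<Rightarrow> nat \<Rightarrow> real) measure" where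
  "obs_space = PiM UNIV (\<lambda>_. PiM UNIV (\<lambda>_. borel))"

definition online_algorithm :: "nat \<Rightarrow> nat \<Rightarrow> algorithm \<Rightarrow> bool" where
  "online_algorithm M N alg \<longleftrightarrow>
     (\<forall>t r Y u. u < M \<longrightarrow> alg t r Y u < N) \<and>
     (\<forall>t u. (\<lambda>(r, Y). alg t r Y u) \<in> measurable (borel \<Otimes>\<^sub>M obs_space) (count_space UNIV))"

(* observations of rounds < t (zero for rounds >= t and users >= M) *)
fun obs :: "algorithm \<Rightarrow> (nat \<Rightarrow> nat \<Rightarrow> real) \<Rightarrow> nat \<Rightarrow> real \<Rightarrow> (nat \<times> nat \<Rightarrow> real)
              \<Rightarrow> nat \<Rightarrow> (nat \<Rightarrow> nat \<Rightarrow> real)" where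
  "obs alg P M r Z 0 = (\<lambda>_ _. 0)"
| "obs alg P M r Z (Suc t) = (obs alg P M r Z t)(t := (\<lambda>u. if u < M
        then P u (alg t r (obs alg P M r Z t) u) + Z (t, u) else 0))"

definition rec_item :: "algorithm \<Rightarrow> (nat \<Rightarrow> nat \<Rightarrow> real) \<Rightarrow> nat \<Rightarrow> real \<Rightarrow> (nat \<times> nat \<Rightarrow> real)
              \<Rightarrow> nat \<Rightarrow> nat \<Rightarrow> nat" where
  "rec_item alg P M r Z t u = alg t r (obs alg P M r Z t) u"

definition regret :: "algorithm \<Rightarrow> real measure \<Rightarrow> (nat \<Rightarrow> nat \<Rightarrow> real) \<Rightarrow> nat \<Rightarrow> nat \<Rightarrow> nat \<Rightarrow> real" where
  "regret alg S P M N T =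
     real T / real M * (\<Sum>u<M. Max (P u ` {..<N}))
     - (\<integral>\<omega>. (case \<omega> of (r, Z) \<Rightarrow>
          (\<Sum>t<T. (1 / real M) * (\<Sum>u<M. P u (rec_item alg P M r Z t u) + Z (t, u))))
        \<partial>(S \<Otimes>\<^sub>M noise_space T M))"

definition to_mat :: "nat \<Rightarrow> nat \<Rightarrow> (nat \<Rightarrow> nat \<Rightarrow> real) \<Rightarrow> real mat" where
  "to_mat M N P = mat M N (\<lambda>(i, j). P i j)"

end

theory Submission
  imports Defs
begin



lemma obs_local:
  assumes "\<And>s u. s < t \<Longrightarrow> u < M \<Longrightarrow> Z (s, u) = Z' (s, u)"
  shows "obs alg P M r Z t = obs alg P M r Z' t"
  using assms
proof (induction t)
  case (Suc t)
  then have IH: "obs alg P M r Z t = obs alg P M r Z' t" by auto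
  show ?case unfolding obs.simps IH using Suc.prems[of t] by (auto simp: fun_eq_iff)
qed simp

definition P0 :: "nat \<Rightarrow> nat \<Rightarrow> real" where "P0 = (\<lambda>u k. 1/2)"
definition Pj :: "real \<Rightarrow> nat \<Rightarrow> nat \<Rightarrow> nat \<Rightarrow> real" where
  "Pj d j = (\<lambda>u k. 1/2 + (if k = j then d else 0))"

lemma obs_shift1:
  assumes "\<And>s u. s < t \<Longrightarrow> u < M \<Longrightarrow>
     W (s, u) = Z (s, u) + (if rec_item alg (Pj d j) M r Z s u = j then d else 0)"
  shows "obs alg (Pj d j) M r Z t = obs alg P0 M r W t"
  using assms
proof (induction t)
  case 0 then show ?case by simp
next
  case (Suc t)
  then have IH: "obs alg (Pj d j) M r Z t = obs alg P0 M r W t" by auto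
  have "\<And>u. u < M \<Longrightarrow> Pj d j u (alg t r (obs alg P0 M r W t) u) + Z (t, u) =
      P0 u (alg t r (obs alg P0 M r W t) u) + W (t, u)"
    using Suc.prems[of t] unfolding rec_item_def IH by (auto simp: P0_def Pj_def)
  then show ?case unfolding obs.simps IH by (auto simp: fun_eq_iff)
qed

lemma obs_shift2:
  assumes "\<And>s u. s < t \<Longrightarrow> u < M \<Longrightarrow>
     W (s, u) = Z (s, u) + (if rec_item alg P0 M r W s u = j then d else 0)"
  shows "obs alg (Pj d j) M r Z t = obs alg P0 M r W t"
  using assms
proof (induction t)
  case 0 then show ?case by simp
next
  case (Suc t)
  then have IH: "obs alg (Pj d j) M r Z t = obs alg P0 M r W t" by auto
  have "\<And>u. u < M \<Longrightarrow> Pj d j u (alg t r (obs alg P0 M r W t) u) + Z (t, u) =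
      P0 u (alg t r (obs alg P0 M r W t) u) + W (t, u)"
    using Suc.prems[of t] unfolding rec_item_def IH by (auto simp: P0_def Pj_def)
  then show ?case unfolding obs.simps IH by (auto simp: fun_eq_iff)
qed

lemma rank_Pj: "vec_space.rank M (to_mat M N (Pj d j)) \<le> 1"
  by (rule vec_space.rank_le_1_product_entries[where f="\<lambda>_. 1" and g="\<lambda>c. Pj d j 0 c" and nc=N])
     (auto simp: to_mat_def Pj_def)




abbreviation SN where "SN \<equiv> std_normal_distribution"

lemma SN_prob: "prob_space SN"
  using real_dist_normal_dist real_distribution.axioms(1) by blast

lemma SN_shift:
  assumes [measurable]: "A \<in> sets borel"
  shows "emeasure SN {x. x + d \<in> A} = (\<integral>\<^sup>+ x. ennreal (exp (d*x - d^2/2)) * indicator A x \<partial>SN)"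
proof -
  have "emeasure SN {x. x + d \<in> A} = (\<integral>\<^sup>+ x. ennreal (std_normal_density x) * indicator A (x + d) \<partial>lborel)"
    by (subst emeasure_density) (auto intro!: nn_integral_cong split: split_indicator)
  also have "\<dots> = (\<integral>\<^sup>+ x. ennreal (std_normal_density ((d + 1 * x) - d)) * indicator A (d + 1 * x) \<partial>lborel)"
    by (auto simp: add.commute)
  also have "\<dots> = (\<integral>\<^sup>+ x. ennreal (std_normal_density (x - d)) * indicator A x \<partial>lborel)"
    by (subst nn_integral_real_affine[where c=1 and t=d]) auto
  also have "\<dots> = (\<integral>\<^sup>+ x. ennreal (std_normal_density x) * (ennreal (exp (d*x - d^2/2)) * indicator A x) \<partial>lborel)"
  proof (intro nn_integral_cong)
    fix x :: real
    have "std_normal_density (x - d) = std_normal_density x * exp (d*x - d^2/2)"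
      by (simp add: std_normal_density_def mult_exp_exp power2_eq_square algebra_simps add_divide_distrib diff_divide_distrib)
    then show "ennreal (std_normal_density (x - d)) * indicator A x =
      ennreal (std_normal_density x) * (ennreal (exp (d*x - d^2/2)) * indicator A x)"
      by (simp add: ennreal_mult' mult.assoc)
  qed
  also have "\<dots> = (\<integral>\<^sup>+ x. ennreal (exp (d*x - d^2/2)) * indicator A x \<partial>SN)"
    by (subst nn_integral_density) auto
  finally show ?thesis .
qed

lemma SN_neg:
  assumes [measurable]: "A \<in> sets borel"
  shows "emeasure SN {x. - x \<in> A} = (\<integral>\<^sup>+ x. 1 * indicator A x \<partial>SN)"
proof -
  have "emeasure SN {x. - x \<in> A} = (\<integral>\<^sup>+ x. ennreal (std_normal_density x) * indicator A (- x) \<partial>lborel)"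
    by (subst emeasure_density) (auto intro!: nn_integral_cong split: split_indicator)
  also have "\<dots> = (\<integral>\<^sup>+ x. ennreal (std_normal_density (0 + (-1) * x)) * indicator A (0 + (-1) * x) \<partial>lborel)"
    by (auto simp: std_normal_density_def)
  also have "\<dots> = (\<integral>\<^sup>+ x. ennreal (std_normal_density x) * indicator A x \<partial>lborel)"
    by (subst nn_integral_real_affine[where c="-1" and t=0]) auto
  also have "\<dots> = (\<integral>\<^sup>+ x. 1 * indicator A x \<partial>SN)"
    by (subst nn_integral_density) auto
  finally show ?thesis .
qed

lemma PiM_map_density:
  fixes I :: "'i set" and f :: "'i \<Rightarrow> real \<Rightarrow> real" and g :: "'i \<Rightarrow> real \<Rightarrow> ennreal"
  assumes fin: "finite I"
    and fm[measurable]: "\<And>i. i \<in> I \<Longrightarrow> f i \<in> borel_measurable borel"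
    and gm[measurable]: "\<And>i. i \<in> I \<Longrightarrow> g i \<in> borel_measurable borel"
    and eq: "\<And>i A. i \<in> I \<Longrightarrow> A \<in> sets borel \<Longrightarrow>
       emeasure SN {x. f i x \<in> A} = (\<integral>\<^sup>+ x. g i x * indicator A x \<partial>SN)"
  shows "distr (PiM I (\<lambda>_. SN)) (PiM I (\<lambda>_. SN)) (\<lambda>x. \<lambda>i\<in>I. f i (x i)) =
         density (PiM I (\<lambda>_. SN)) (\<lambda>x. \<Prod>i\<in>I. g i (x i))"
proof -
  interpret pps: product_prob_space "\<lambda>_. SN" I
    by (intro product_prob_spaceI) (rule SN_prob)
  have fm': "(\<lambda>x. f i (x i)) \<in> PiM I (\<lambda>_. SN) \<rightarrow>\<^sub>M SN" if "i \<in> I" for i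
  proof -
    have "f i \<in> SN \<rightarrow>\<^sub>M SN" using fm[OF that] by (subst measurable_cong_sets[where M'=borel and N'=borel]) auto
    then show ?thesis by (rule measurable_compose[OF measurable_component_singleton[OF that]])
  qed
  have gm': "(\<lambda>x. g i (x i)) \<in> borel_measurable (PiM I (\<lambda>_. SN))" if "i \<in> I" for i
  proof -
    have "g i \<in> SN \<rightarrow>\<^sub>M borel" using gm[OF that] by (subst measurable_cong_sets[where M'=borel and N'=borel]) auto
    then show ?thesis by (rule measurable_compose[OF measurable_component_singleton[OF that]])
  qed
  have meas: "(\<lambda>x. \<lambda>i\<in>I. f i (x i)) \<in> measurable (PiM I (\<lambda>_. SN)) (PiM I (\<lambda>_. SN))"
    by (intro measurable_restrict) (rule fm')
  have gpm: "(\<lambda>x. \<Prod>i\<in>I. g i (x i)) \<in> borel_measurable (PiM I (\<lambda>_. SN))"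
    by (intro borel_measurable_prod_ennreal) (auto intro!: gm')
  show ?thesis
  proof (rule measure_eqI_PiM_finite[where M="\<lambda>_. SN" and I=I and A="\<lambda>_. space (PiM I (\<lambda>_. SN))"])
    show "finite I" by fact
    show "sets (distr (PiM I (\<lambda>_. SN)) (PiM I (\<lambda>_. SN)) (\<lambda>x. \<lambda>i\<in>I. f i (x i))) = sets (PiM I (\<lambda>_. SN))"
      by simp
    show "sets (density (PiM I (\<lambda>_. SN)) (\<lambda>x. \<Prod>i\<in>I. g i (x i))) = sets (PiM I (\<lambda>_. SN))"
      by simp
    show "range (\<lambda>_::nat. space (PiM I (\<lambda>_. SN))) \<subseteq> prod_algebra I (\<lambda>_. SN)"
      using space_in_prod_algebra[of I "\<lambda>_. SN"] by (auto simp: space_PiM)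
    show "(\<Union>i::nat. space (PiM I (\<lambda>_. SN))) = space (PiM I (\<lambda>_. SN))" by simp
    show "emeasure (distr (PiM I (\<lambda>_. SN)) (PiM I (\<lambda>_. SN)) (\<lambda>x. \<lambda>i\<in>I. f i (x i))) (space (PiM I (\<lambda>_. SN))) \<noteq> \<infinity>" for i :: nat
      by (simp add: emeasure_distr meas)
  next
    fix A assume A[measurable]: "\<And>i. i \<in> I \<Longrightarrow> A i \<in> sets SN"
    have "(\<lambda>x. \<lambda>i\<in>I. f i (x i)) -` Pi\<^sub>E I A \<inter> space (PiM I (\<lambda>_. SN)) = Pi\<^sub>E I (\<lambda>i. {x. f i x \<in> A i})"
      by (auto simp: space_PiM PiE_def Pi_def extensional_def)
    then have "emeasure (distr (PiM I (\<lambda>_. SN)) (PiM I (\<lambda>_. SN)) (\<lambda>x. \<lambda>i\<in>I. f i (x i))) (Pi\<^sub>E I A)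
        = emeasure (PiM I (\<lambda>_. SN)) (Pi\<^sub>E I (\<lambda>i. {x. f i x \<in> A i}))"
      using meas by (subst emeasure_distr) (auto intro!: sets_PiM_I_finite[OF fin] A)
    also have "\<dots> = (\<Prod>i\<in>I. emeasure SN {x. f i x \<in> A i})"
      by (subst pps.emeasure_PiM) (auto simp: fin)
    also have "\<dots> = (\<Prod>i\<in>I. (\<integral>\<^sup>+ x. g i x * indicator (A i) x \<partial>SN))"
      using A by (intro prod.cong refl eq) auto
    also have "\<dots> = (\<integral>\<^sup>+ x. (\<Prod>i\<in>I. g i (x i) * indicator (A i) (x i)) \<partial>PiM I (\<lambda>_. SN))"
      by (subst pps.product_nn_integral_prod) (auto simp: fin)
    also have "\<dots> = (\<integral>\<^sup>+ x. (\<Prod>i\<in>I. g i (x i)) * indicator (Pi\<^sub>E I A) x \<partial>PiM I (\<lambda>_. SN))"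
    proof (intro nn_integral_cong)
      fix x assume "x \<in> space (PiM I (\<lambda>_. SN))"
      then have ext: "x \<in> extensional I" by (auto simp: space_PiM PiE_def)
      show "(\<Prod>i\<in>I. g i (x i) * indicator (A i) (x i)) = (\<Prod>i\<in>I. g i (x i)) * indicator (Pi\<^sub>E I A) x"
        using ext by (simp add: prod.distrib indicator_def PiE_def Pi_def prod_zero_iff fin) blast
    qed
    also have "\<dots> = emeasure (density (PiM I (\<lambda>_. SN)) (\<lambda>x. \<Prod>i\<in>I. g i (x i))) (Pi\<^sub>E I A)"
      using gpm A by (subst emeasure_density) (auto intro!: sets_PiM_I_finite fin)
    finally show "emeasure (distr (PiM I (\<lambda>_. SN)) (PiM I (\<lambda>_. SN)) (\<lambda>x. \<lambda>i\<in>I. f i (x i))) (Pi\<^sub>E I A)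
        = emeasure (density (PiM I (\<lambda>_. SN)) (\<lambda>x. \<Prod>i\<in>I. g i (x i))) (Pi\<^sub>E I A)" .
  qed
qed




lemma obs_space_measurableI:
  assumes "\<And>s u. (\<lambda>x. g x s u) \<in> borel_measurable X"
  shows "g \<in> X \<rightarrow>\<^sub>M obs_space"
proof -
  have "(\<lambda>x s. g x s) \<in> X \<rightarrow>\<^sub>M PiM UNIV (\<lambda>_. PiM UNIV (\<lambda>_. borel))"
  proof (rule measurable_PiM_single')
    fix s :: nat
    show "(\<lambda>x. g x s) \<in> X \<rightarrow>\<^sub>M PiM UNIV (\<lambda>_. borel)"
      using assms by (intro measurable_PiM_single') (auto simp: space_PiM)
  qed (auto simp: space_PiM)
  then show ?thesis by (simp add: obs_space_def)
qed

lemma obs_space_component: "(\<lambda>Y. Y s u) \<in> obs_space \<rightarrow>\<^sub>M borel"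
proof -
  have "(\<lambda>Y. Y s) \<in> obs_space \<rightarrow>\<^sub>M PiM UNIV (\<lambda>_. borel)"
    unfolding obs_space_def by (rule measurable_component_singleton) auto
  moreover have "(\<lambda>y. y u) \<in> PiM UNIV (\<lambda>_. borel) \<rightarrow>\<^sub>M (borel :: real measure)"
    by (rule measurable_component_singleton) auto
  ultimately show ?thesis by (rule measurable_compose)
qed

lemma obs_meas:
  assumes alg: "online_algorithm M N alg"
  assumes "t \<le> T"
  shows "(\<lambda>x. obs alg P M (fst x) (snd x) t) \<in> (borel \<Otimes>\<^sub>M noise_space T M) \<rightarrow>\<^sub>M obs_space"
  using assms(2)
proof (induction t)
  case 0
  show ?case by (rule obs_space_measurableI) simp
next
  case (Suc t)
  then have IH: "(\<lambda>x. obs alg P M (fst x) (snd x) t) \<in> (borel \<Otimes>\<^sub>M noise_space T M) \<rightarrow>\<^sub>M obs_space"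
    by auto
  have am: "(\<lambda>x. alg t (fst x) (obs alg P M (fst x) (snd x) t) u) \<in> (borel \<Otimes>\<^sub>M noise_space T M) \<rightarrow>\<^sub>M count_space UNIV" for u
  proof -
    have "(\<lambda>x. (fst x, obs alg P M (fst x) (snd x) t)) \<in> (borel \<Otimes>\<^sub>M noise_space T M) \<rightarrow>\<^sub>M (borel \<Otimes>\<^sub>M obs_space)"
      using IH by (intro measurable_Pair) auto
    moreover have "(\<lambda>(r, Y). alg t r Y u) \<in> (borel \<Otimes>\<^sub>M obs_space) \<rightarrow>\<^sub>M count_space UNIV"
      using alg by (auto simp: online_algorithm_def)
    ultimately have "(\<lambda>x. (\<lambda>(r, Y). alg t r Y u) (fst x, obs alg P M (fst x) (snd x) t))
       \<in> (borel \<Otimes>\<^sub>M noise_space T M) \<rightarrow>\<^sub>M count_space UNIV"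
      by (rule measurable_compose)
    then show ?thesis by simp
  qed
  have Pm: "(\<lambda>x. P u (alg t (fst x) (obs alg P M (fst x) (snd x) t) u)) \<in> borel_measurable (borel \<Otimes>\<^sub>M noise_space T M)" for u
    by (rule measurable_compose[OF am]) simp
  have Zm: "(\<lambda>x. snd x (t, u)) \<in> borel_measurable (borel \<Otimes>\<^sub>M noise_space T M)" if "u < M" for u
  proof -
    have "(t, u) \<in> {..<T} \<times> {..<M}" using Suc.prems that by auto
    then have "(\<lambda>Z. Z (t, u)) \<in> noise_space T M \<rightarrow>\<^sub>M SN"
      unfolding noise_space_def by (rule measurable_component_singleton)
    then have "(\<lambda>Z. Z (t, u)) \<in> noise_space T M \<rightarrow>\<^sub>M borel"
      by (subst measurable_cong_sets[where M'="noise_space T M" and N'=SN]) auto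
    then show ?thesis by (rule measurable_compose[OF measurable_snd])
  qed
  have Om: "(\<lambda>x. obs alg P M (fst x) (snd x) t s u) \<in> borel_measurable (borel \<Otimes>\<^sub>M noise_space T M)" for s u
    by (rule measurable_compose[OF IH obs_space_component])
  show ?case
  proof (rule obs_space_measurableI)
    fix s u
    show "(\<lambda>x. obs alg P M (fst x) (snd x) (Suc t) s u) \<in> borel_measurable (borel \<Otimes>\<^sub>M noise_space T M)"
    proof (cases "s = t")
      case True
      show ?thesis
      proof (cases "u < M")
        case True
        with \<open>s = t\<close> show ?thesis using borel_measurable_add[OF Pm[of u] Zm[OF True]] by simp
      qed (simp add: \<open>s = t\<close>)
    next
      case False
      then show ?thesis using Om[of s u] by simp
    qed
  qed
qed




lemma rec_meas:
  assumes alg: "online_algorithm M N alg"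
  assumes "t \<le> T"
  shows "(\<lambda>x. rec_item alg P M (fst x) (snd x) t u) \<in> (borel \<Otimes>\<^sub>M noise_space T M) \<rightarrow>\<^sub>M count_space UNIV"
proof -
  have "(\<lambda>x. (fst x, obs alg P M (fst x) (snd x) t)) \<in> (borel \<Otimes>\<^sub>M noise_space T M) \<rightarrow>\<^sub>M (borel \<Otimes>\<^sub>M obs_space)"
    using obs_meas[OF assms] by (intro measurable_Pair) auto
  moreover have "(\<lambda>(r, Y). alg t r Y u) \<in> (borel \<Otimes>\<^sub>M obs_space) \<rightarrow>\<^sub>M count_space UNIV"
    using alg by (auto simp: online_algorithm_def)
  ultimately have "(\<lambda>x. (\<lambda>(r, Y). alg t r Y u) (fst x, obs alg P M (fst x) (snd x) t))
     \<in> (borel \<Otimes>\<^sub>M noise_space T M) \<rightarrow>\<^sub>M count_space UNIV"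
    by (rule measurable_compose)
  then show ?thesis by (simp add: rec_item_def)
qed

lemma rec_meas_r:
  assumes alg: "online_algorithm M N alg"
  assumes "t \<le> T"
  shows "(\<lambda>Z. rec_item alg P M r Z t u) \<in> noise_space T M \<rightarrow>\<^sub>M count_space UNIV"
proof -
  have "(\<lambda>Z. (r, Z)) \<in> noise_space T M \<rightarrow>\<^sub>M (borel \<Otimes>\<^sub>M noise_space T M)"
    by (rule measurable_Pair1') simp
  from measurable_compose[OF this rec_meas[OF assms]] show ?thesis by simp
qed

lemma noise_prob: "prob_space (noise_space T M)"
proof -
  interpret pps: product_prob_space "\<lambda>_. SN" "{..<T} \<times> {..<M}"
    by (intro product_prob_spaceI) (rule SN_prob)
  show ?thesis unfolding noise_space_def by (rule pps.P.prob_space_axioms)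
qed

locale core =
  fixes M N T :: nat and alg :: algorithm and r :: real and \<Delta> :: real and j :: nat
  assumes alg: "online_algorithm M N alg"
begin

definition "I = {..<T} \<times> {..<M}"
abbreviation "\<nu> \<equiv> noise_space T M"
definition "A W = {i \<in> I. rec_item alg P0 M r W (fst i) (snd i) = j}"
definition "B Z = {i \<in> I. rec_item alg (Pj \<Delta> j) M r Z (fst i) (snd i) = j}"
definition "dd p i = (if i \<in> p then \<Delta> else 0)"
definition "sh p Z = (\<lambda>i\<in>I. Z i + dd p i)"
definition "\<rho> p W = (\<Prod>i\<in>I. ennreal (exp (dd p i * W i - (dd p i)^2 / 2)))"

lemma finI[simp]: "finite I" by (simp add: I_def)
lemma A_sub: "A W \<subseteq> I" by (auto simp: A_def)
lemma B_sub: "B W \<subseteq> I" by (auto simp: B_def)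

lemma B_iff_A:
  assumes "p \<subseteq> I"
  shows "B Z = p \<longleftrightarrow> A (sh p Z) = p"
proof
  assume H: "B Z = p"
  have "obs alg (Pj \<Delta> j) M r Z t = obs alg P0 M r (sh p Z) t" if "t \<le> T" for t
  proof (rule obs_shift1)
    fix s u assume su: "s < t" "u < M"
    then have inI: "(s, u) \<in> I" using that by (auto simp: I_def)
    have "(s, u) \<in> p \<longleftrightarrow> rec_item alg (Pj \<Delta> j) M r Z s u = j"
      using inI unfolding H[symmetric] B_def by auto
    then show "sh p Z (s, u) = Z (s, u) + (if rec_item alg (Pj \<Delta> j) M r Z s u = j then \<Delta> else 0)"
      using inI by (simp add: sh_def dd_def)
  qed
  then have "rec_item alg (Pj \<Delta> j) M r Z t u = rec_item alg P0 M r (sh p Z) t u" if "t < T" for t u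
    using that by (simp add: rec_item_def)
  then have "A (sh p Z) = B Z" by (auto simp: A_def B_def I_def)
  with H show "A (sh p Z) = p" by simp
next
  assume H: "A (sh p Z) = p"
  have "obs alg (Pj \<Delta> j) M r Z t = obs alg P0 M r (sh p Z) t" if "t \<le> T" for t
  proof (rule obs_shift2)
    fix s u assume su: "s < t" "u < M"
    then have inI: "(s, u) \<in> I" using that by (auto simp: I_def)
    have "(s, u) \<in> A (sh p Z) \<longleftrightarrow> rec_item alg P0 M r (sh p Z) s u = j"
      using inI unfolding A_def by auto
    then have "(s, u) \<in> p \<longleftrightarrow> rec_item alg P0 M r (sh p Z) s u = j"
      by (simp only: H)
    then show "sh p Z (s, u) = Z (s, u) + (if rec_item alg P0 M r (sh p Z) s u = j then \<Delta> else 0)"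
      using inI by (simp add: sh_def dd_def)
  qed
  then have "rec_item alg (Pj \<Delta> j) M r Z t u = rec_item alg P0 M r (sh p Z) t u" if "t < T" for t u
    using that by (simp add: rec_item_def)
  then have "A (sh p Z) = B Z" by (auto simp: A_def B_def I_def)
  with H show "B Z = p" by simp
qed

lemma distr_sh: "distr \<nu> \<nu> (sh p) = density \<nu> (\<rho> p)"
  unfolding noise_space_def sh_def \<rho>_def I_def[symmetric]
proof (rule PiM_map_density[where f="\<lambda>i x. x + dd p i" and g="\<lambda>i x. ennreal (exp (dd p i * x - (dd p i)^2/2))"])
  fix i and A :: "real set" assume "A \<in> sets borel"
  then show "emeasure SN {x. x + dd p i \<in> A} = (\<integral>\<^sup>+ x. ennreal (exp (dd p i * x - (dd p i)^2/2)) * indicator A x \<partial>SN)"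
    by (rule SN_shift)
qed auto

definition "Lp p W = exp (\<Sum>i\<in>p. \<Delta> * W i - \<Delta>^2 / 2)"
definition "L W = Lp (A W) W"

lemma rec_inI_meas: "i \<in> I \<Longrightarrow> (\<lambda>W. rec_item alg P M r W (fst i) (snd i)) \<in> \<nu> \<rightarrow>\<^sub>M count_space UNIV"
  by (rule rec_meas_r[OF alg]) (auto simp: I_def)

lemma rec_pred: "i \<in> I \<Longrightarrow> {W \<in> space \<nu>. rec_item alg P M r W (fst i) (snd i) = k} \<in> sets \<nu>"
proof -
  assume "i \<in> I"
  from measurable_sets[OF rec_inI_meas[OF this], of "{k}"]
  show ?thesis by (simp add: vimage_def Int_def conj_commute)
qed

lemma setpat_meas:
  assumes "p \<subseteq> I"
  shows "{W \<in> space \<nu>. {i \<in> I. rec_item alg P M r W (fst i) (snd i) = k} = p} \<in> sets \<nu>"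
proof -
  have "{W \<in> space \<nu>. \<forall>i\<in>I. (i \<in> p \<longleftrightarrow> rec_item alg P M r W (fst i) (snd i) = k)} \<in> sets \<nu>"
  proof (rule sets.sets_Collect_countable_All')
    fix i assume i: "i \<in> I"
    show "{W \<in> space \<nu>. (i \<in> p \<longleftrightarrow> rec_item alg P M r W (fst i) (snd i) = k)} \<in> sets \<nu>"
    proof (cases "i \<in> p")
      case True then show ?thesis using rec_pred[OF i] by simp
    next
      case False then show ?thesis using sets.sets_Collect_neg[OF rec_pred[OF i]] by simp
    qed
  qed (simp add: I_def)
  moreover have "{W \<in> space \<nu>. {i \<in> I. rec_item alg P M r W (fst i) (snd i) = k} = p} =
     {W \<in> space \<nu>. \<forall>i\<in>I. (i \<in> p \<longleftrightarrow> rec_item alg P M r W (fst i) (snd i) = k)}"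
    using assms by blast
  ultimately show ?thesis by simp
qed

lemma A_meas: "p \<subseteq> I \<Longrightarrow> {W \<in> space \<nu>. A W = p} \<in> sets \<nu>"
  unfolding A_def by (rule setpat_meas)
lemma B_meas: "p \<subseteq> I \<Longrightarrow> {W \<in> space \<nu>. B W = p} \<in> sets \<nu>"
  unfolding B_def by (rule setpat_meas)

lemma sh_meas: "sh p \<in> \<nu> \<rightarrow>\<^sub>M \<nu>"
  unfolding sh_def noise_space_def I_def by measurable

lemma sh_space: "sh p Z \<in> space \<nu>"
  by (auto simp: sh_def noise_space_def space_PiM I_def)

lemma rho_eq: "p \<subseteq> I \<Longrightarrow> \<rho> p W = ennreal (Lp p W)"
proof -
  assume p: "p \<subseteq> I"
  have "\<rho> p W = ennreal (\<Prod>i\<in>I. exp (dd p i * W i - (dd p i)^2 / 2))"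
    unfolding \<rho>_def by (rule prod_ennreal) simp
  also have "(\<Prod>i\<in>I. exp (dd p i * W i - (dd p i)^2 / 2)) = exp (\<Sum>i\<in>I. dd p i * W i - (dd p i)^2 / 2)"
    by (simp add: exp_sum)
  also have "(\<Sum>i\<in>I. dd p i * W i - (dd p i)^2 / 2) = (\<Sum>i\<in>p. \<Delta> * W i - \<Delta>^2 / 2)"
  proof -
    have "(\<Sum>i\<in>I. dd p i * W i - (dd p i)^2 / 2) = (\<Sum>i\<in>I. if i \<in> p then \<Delta> * W i - \<Delta>^2 / 2 else 0)"
      by (intro sum.cong) (auto simp: dd_def)
    also have "\<dots> = (\<Sum>i\<in>p. \<Delta> * W i - \<Delta>^2 / 2)"
      using p by (simp add: sum.If_cases Int_absorb1)
    finally show ?thesis .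
  qed
  finally show ?thesis by (simp add: Lp_def)
qed

lemma comp_meas: "i \<in> I \<Longrightarrow> (\<lambda>W. W i) \<in> borel_measurable \<nu>"
proof -
  assume "i \<in> I"
  then have "(\<lambda>W. W i) \<in> \<nu> \<rightarrow>\<^sub>M SN"
    unfolding noise_space_def I_def by (rule measurable_component_singleton)
  then show ?thesis by (subst measurable_cong_sets[where M'="\<nu>" and N'=SN]) auto
qed

lemma Lp_meas: "p \<subseteq> I \<Longrightarrow> Lp p \<in> borel_measurable \<nu>"
proof -
  assume p: "p \<subseteq> I"
  have "(\<lambda>W. \<Sum>i\<in>p. \<Delta> * W i - \<Delta>^2 / 2) \<in> borel_measurable \<nu>"
  proof (rule borel_measurable_sum)
    fix i assume "i \<in> p"
    then have "(\<lambda>W. W i) \<in> borel_measurable \<nu>" using p by (intro comp_meas) auto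
    then show "(\<lambda>W. \<Delta> * W i - \<Delta>^2 / 2) \<in> borel_measurable \<nu>" by measurable
  qed
  then show ?thesis unfolding Lp_def by measurable
qed

lemma change_measure:
  assumes f: "\<And>p. 0 \<le> f p"
  shows "(\<integral>\<^sup>+ Z. ennreal (f (B Z)) \<partial>\<nu>) = (\<integral>\<^sup>+ W. ennreal (f (A W) * L W) \<partial>\<nu>)"
proof -
  have "(\<integral>\<^sup>+ Z. ennreal (f (B Z)) \<partial>\<nu>) =
      (\<integral>\<^sup>+ Z. (\<Sum>p\<in>Pow I. ennreal (f p) * indicator {Z \<in> space \<nu>. B Z = p} Z) \<partial>\<nu>)"
  proof (intro nn_integral_cong)
    fix Z assume Z: "Z \<in> space \<nu>"
    have "(\<Sum>p\<in>Pow I. ennreal (f p) * indicator {Z \<in> space \<nu>. B Z = p} Z) =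
        (\<Sum>p\<in>Pow I. if B Z = p then ennreal (f p) else 0)"
      using Z by (intro sum.cong) (auto simp: indicator_def)
    also have "\<dots> = ennreal (f (B Z))"
      using B_sub[of Z] by (simp add: sum.delta)
    finally show "ennreal (f (B Z)) = (\<Sum>p\<in>Pow I. ennreal (f p) * indicator {Z \<in> space \<nu>. B Z = p} Z)" ..
  qed
  also have "\<dots> = (\<Sum>p\<in>Pow I. ennreal (f p) * emeasure \<nu> {Z \<in> space \<nu>. B Z = p})"
    apply (subst nn_integral_sum)
      apply simp
     apply (intro borel_measurable_times_ennreal borel_measurable_const borel_measurable_indicator B_meas)
     apply simp
    apply (intro sum.cong refl nn_integral_cmult_indicator B_meas)
    apply simp
    done
  also have "\<dots> = (\<Sum>p\<in>Pow I. ennreal (f p) * (\<integral>\<^sup>+ W. ennreal (Lp p W) * indicator {W \<in> space \<nu>. A W = p} W \<partial>\<nu>))"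
  proof (intro sum.cong refl arg_cong2[where f="(*)"])
    fix p assume "p \<in> Pow I"
    then have p: "p \<subseteq> I" by auto
    have rho_fun: "\<rho> p = (\<lambda>W. ennreal (Lp p W))"
      by (rule ext) (rule rho_eq[OF p])
    have "{Z \<in> space \<nu>. B Z = p} = sh p -` {W \<in> space \<nu>. A W = p} \<inter> space \<nu>"
      using B_iff_A[OF p] sh_space by auto
    then have "emeasure \<nu> {Z \<in> space \<nu>. B Z = p} = emeasure (distr \<nu> \<nu> (sh p)) {W \<in> space \<nu>. A W = p}"
      by (simp add: emeasure_distr sh_meas A_meas[OF p])
    also have "\<dots> = emeasure (density \<nu> (\<rho> p)) {W \<in> space \<nu>. A W = p}"
      by (simp add: distr_sh)
    also have "\<dots> = emeasure (density \<nu> (\<lambda>W. ennreal (Lp p W))) {W \<in> space \<nu>. A W = p}"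
      by (simp only: rho_fun)
    also have "\<dots> = (\<integral>\<^sup>+ W. ennreal (Lp p W) * indicator {W \<in> space \<nu>. A W = p} W \<partial>\<nu>)"
      by (rule emeasure_density) (auto intro!: measurable_compose[OF Lp_meas[OF p] measurable_ennreal] A_meas[OF p])
    finally show "emeasure \<nu> {Z \<in> space \<nu>. B Z = p} = (\<integral>\<^sup>+ W. ennreal (Lp p W) * indicator {W \<in> space \<nu>. A W = p} W \<partial>\<nu>)" .
  qed
  also have "\<dots> = (\<integral>\<^sup>+ W. (\<Sum>p\<in>Pow I. ennreal (f p) * (ennreal (Lp p W) * indicator {W \<in> space \<nu>. A W = p} W)) \<partial>\<nu>)"
    apply (subst nn_integral_sum)
      apply simp
     apply (intro borel_measurable_times_ennreal borel_measurable_const borel_measurable_indicator A_meas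
        measurable_compose[OF Lp_meas measurable_ennreal])
      apply simp
     apply simp
    apply (intro sum.cong refl)
    apply (subst nn_integral_cmult)
     apply (intro borel_measurable_times_ennreal borel_measurable_indicator A_meas
        measurable_compose[OF Lp_meas measurable_ennreal])
      apply simp_all
    done
  also have "\<dots> = (\<integral>\<^sup>+ W. ennreal (f (A W) * L W) \<partial>\<nu>)"
  proof (intro nn_integral_cong)
    fix W assume W: "W \<in> space \<nu>"
    have "(\<Sum>p\<in>Pow I. ennreal (f p) * (ennreal (Lp p W) * indicator {W \<in> space \<nu>. A W = p} W)) =
        (\<Sum>p\<in>Pow I. if A W = p then ennreal (f p) * ennreal (Lp p W) else 0)"
      using W by (intro sum.cong) (auto simp: indicator_def)
    also have "\<dots> = ennreal (f (A W) * L W)"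
      using A_sub[of W] f by (simp add: sum.delta L_def ennreal_mult Lp_def)
    finally show "(\<Sum>p\<in>Pow I. ennreal (f p) * (ennreal (Lp p W) * indicator {W \<in> space \<nu>. A W = p} W)) = ennreal (f (A W) * L W)" .
  qed
  finally show ?thesis .
qed

end




lemma key_ineq:
  fixes a K Lv \<epsilon> :: real
  assumes a: "0 \<le> a" "a \<le> K" and Lv: "0 < Lv" and e: "0 < \<epsilon>"
  shows "a * (Lv - 1) \<le> K / 2 * ((Lv - 1 - ln Lv) / (2 * \<epsilon>) + \<epsilon> * (Lv + 1) + (Lv - 1))"
proof -
  define s where "s = sqrt Lv"
  have s0: "0 < s" using Lv by (auto simp: s_def)
  have Lvs: "Lv = s * s" using Lv by (simp add: s_def)
  have i: "a * (Lv - 1) \<le> K / 2 * (\<bar>Lv - 1\<bar> + (Lv - 1))"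
  proof (cases "Lv \<ge> 1")
    case True
    then have "a * (Lv - 1) \<le> K * (Lv - 1)" using a by (intro mult_right_mono) auto
    moreover have h: "\<bar>Lv - 1\<bar> + (Lv - 1) = 2 * (Lv - 1)" using True by simp
    ultimately show ?thesis by (simp only: h)
  next
    case False
    then have "a * (Lv - 1) \<le> 0" using a by (intro mult_nonneg_nonpos) auto
    moreover have h: "\<bar>Lv - 1\<bar> + (Lv - 1) = 0" using False by simp
    ultimately show ?thesis by (simp only: h)
  qed
  have lnLv: "ln Lv = 2 * ln s" unfolding Lvs using s0 by (simp add: ln_mult)
  have lns: "ln s \<le> s - 1" using s0 by (intro ln_le_minus_one) auto
  have "\<bar>Lv - 1\<bar> = \<bar>s - 1\<bar> * (s + 1)"
  proof -
    have "Lv - 1 = (s - 1) * (s + 1)" unfolding Lvs by (simp add: algebra_simps)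
    then show ?thesis using s0 by (simp add: abs_mult)
  qed
  also have "\<dots> \<le> (s - 1)^2 / (2 * \<epsilon>) + \<epsilon> * (s + 1)^2 / 2"
  proof -
    define x where "x = \<bar>s - 1\<bar>"
    define y where "y = s + 1"
    have x2: "(s - 1)^2 = x^2" by (simp add: x_def)
    have "0 \<le> (x - \<epsilon> * y)^2" by simp
    then have "2 * \<epsilon> * (x * y) \<le> x^2 + \<epsilon>^2 * y^2"
      by (simp add: power2_eq_square algebra_simps)
    then have "x * y \<le> (x^2 + \<epsilon>^2 * y^2) / (2 * \<epsilon>)"
      using e by (simp add: pos_le_divide_eq mult.commute mult.left_commute)
    also have "(x^2 + \<epsilon>^2 * y^2) / (2 * \<epsilon>) = x^2 / (2 * \<epsilon>) + \<epsilon> * y^2 / 2"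
      using e by (simp add: add_divide_distrib power2_eq_square)
    finally show ?thesis unfolding x2 by (simp add: x_def y_def)
  qed
  also have "(s - 1)^2 \<le> Lv - 1 - ln Lv"
  proof -
    have "(s - 1)^2 = Lv - 2 * s + 1" unfolding Lvs by (simp add: power2_eq_square algebra_simps)
    then show ?thesis using lnLv lns by linarith
  qed
  also have "(s + 1)^2 \<le> 2 * (Lv + 1)"
  proof -
    have "0 \<le> (s - 1)^2" by simp
    moreover have "(s - 1)^2 = Lv - 2 * s + 1" unfolding Lvs by (simp add: power2_eq_square algebra_simps)
    moreover have "(s + 1)^2 = Lv + 2 * s + 1" unfolding Lvs by (simp add: power2_eq_square algebra_simps)
    ultimately show ?thesis by (smt (verit))
  qed
  finally have "\<bar>Lv - 1\<bar> \<le> (Lv - 1 - ln Lv) / (2 * \<epsilon>) + \<epsilon> * (2 * (Lv + 1)) / 2"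
    using e by (simp add: divide_right_mono mult_left_mono)
  moreover have "\<epsilon> * (2 * (Lv + 1)) / 2 = \<epsilon> * (Lv + 1)" by simp
  ultimately have ab: "\<bar>Lv - 1\<bar> \<le> (Lv - 1 - ln Lv) / (2 * \<epsilon>) + \<epsilon> * (Lv + 1)" by linarith
  have K0: "0 \<le> K" using a by simp
  have "K / 2 * (\<bar>Lv - 1\<bar> + (Lv - 1)) \<le> K / 2 * ((Lv - 1 - ln Lv) / (2 * \<epsilon>) + \<epsilon> * (Lv + 1) + (Lv - 1))"
    using ab K0 by (intro mult_left_mono) auto
  with i show ?thesis by linarith
qed

context core begin

definition "rf i0 W = (\<lambda>i\<in>I. if i = i0 then - W i else W i)"

lemma distr_rf: "distr \<nu> \<nu> (rf i0) = \<nu>"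
proof -
  have "distr \<nu> \<nu> (rf i0) = density \<nu> (\<lambda>x. \<Prod>i\<in>I. (\<lambda>i x. 1::ennreal) i (x i))"
    unfolding noise_space_def rf_def I_def[symmetric]
  proof (rule PiM_map_density[where f="\<lambda>i x. if i = i0 then - x else x" and g="\<lambda>i x. 1"])
    fix i and A :: "real set" assume A: "A \<in> sets borel"
    show "emeasure SN {x. (if i = i0 then - x else x) \<in> A} = (\<integral>\<^sup>+ x. 1 * indicator A x \<partial>SN)"
    proof (cases "i = i0")
      case True then show ?thesis using SN_neg[OF A] by simp
    next
      case False then show ?thesis using A by simp
    qed
  qed auto
  also have "\<dots> = \<nu>" by (simp add: density_1)
  finally show ?thesis .
qed

lemma rf_meas: "rf i0 \<in> \<nu> \<rightarrow>\<^sub>M \<nu>"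
  unfolding rf_def noise_space_def I_def by measurable

lemma rec_rf:
  assumes "(t, u) \<in> I"
  shows "rec_item alg P M r (rf (t, u) W) t u = rec_item alg P M r W t u"
proof -
  have "obs alg P M r (rf (t, u) W) t = obs alg P M r W t"
  proof (rule obs_local)
    fix s u' assume "s < t" "u' < M"
    then show "rf (t, u) W (s, u') = W (s, u')" using assms by (auto simp: rf_def I_def)
  qed
  then show ?thesis by (simp add: rec_item_def)
qed

definition "c i W = (if rec_item alg P0 M r W (fst i) (snd i) = j then 1 else (0::real))"

lemma c_meas: "i \<in> I \<Longrightarrow> c i \<in> borel_measurable \<nu>"
  unfolding c_def
  by (rule measurable_compose[OF rec_inI_meas[of i P0], where g="\<lambda>k. if k = j then 1 else (0::real)"]) auto

lemma mart:
  assumes i: "i \<in> I"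
  shows "(\<integral>W. c i W * W i \<partial>\<nu>) = 0"
proof -
  have hm: "(\<lambda>W. c i W * W i) \<in> borel_measurable \<nu>"
    using c_meas[OF i] comp_meas[OF i] by measurable
  have "(\<integral>W. c i W * W i \<partial>\<nu>) = (\<integral>W. c i W * W i \<partial>distr \<nu> \<nu> (rf i))"
    by (simp add: distr_rf)
  also have "\<dots> = (\<integral>W. c i (rf i W) * rf i W i \<partial>\<nu>)"
    by (rule integral_distr[OF rf_meas hm])
  also have "\<dots> = (\<integral>W. - (c i W * W i) \<partial>\<nu>)"
  proof (rule Bochner_Integration.integral_cong[OF refl])
    fix W
    obtain t u where tu: "i = (t, u)" by (cases i)
    have "c i (rf i W) = c i W" using rec_rf[of t u P0 W] i by (simp add: c_def tu)
    moreover have "rf i W i = - W i" using i by (simp add: rf_def)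
    ultimately show "c i (rf i W) * rf i W i = - (c i W * W i)" by simp
  qed
  also have "\<dots> = - (\<integral>W. c i W * W i \<partial>\<nu>)" by simp
  finally show ?thesis by simp
qed


lemma comp_int: "i \<in> I \<Longrightarrow> integrable \<nu> (\<lambda>W. W i)"
proof -
  assume i: "i \<in> I"
  have d: "distr \<nu> SN (\<lambda>W. W i) = SN"
    unfolding noise_space_def using i unfolding I_def
    by (intro distr_PiM_component) (auto intro: SN_prob)
  have "integrable SN (\<lambda>x::real. x)"
    using integrable_std_normal_distribution_moment[of 1] by simp
  then have "integrable (distr \<nu> SN (\<lambda>W. W i)) (\<lambda>x::real. x)" by (simp only: d)
  then show ?thesis
    by (subst (asm) integrable_distr_eq) (auto intro: measurable_component_singleton simp: noise_space_def i[unfolded I_def])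
qed

definition "cA W = real (card (A W))"
definition "cB Z = real (card (B Z))"
definition "ell W = (\<Sum>i\<in>I. c i W * (\<Delta> * W i - \<Delta>^2 / 2))"

lemma cA_sum: "cA W = (\<Sum>i\<in>I. c i W)"
  unfolding cA_def A_def c_def by (simp add: sum.inter_filter[symmetric])

lemma L_exp: "L W = exp (ell W)"
  unfolding L_def Lp_def ell_def A_def c_def by (simp add: sum.inter_filter, intro sum.cong) auto

lemma ell_alt: "ell W = \<Delta> * (\<Sum>i\<in>I. c i W * W i) - \<Delta>^2 / 2 * cA W"
  unfolding ell_def cA_sum by (simp add: algebra_simps sum_distrib_left sum_subtractf)

lemma cA_meas: "cA \<in> borel_measurable \<nu>"
proof -
  have "(\<lambda>W. \<Sum>i\<in>I. c i W) \<in> borel_measurable \<nu>"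
    by (intro borel_measurable_sum c_meas)
  then show ?thesis by (simp add: cA_sum[abs_def])
qed

lemma cB_meas: "cB \<in> borel_measurable \<nu>"
proof -
  have "(\<lambda>W. \<Sum>i\<in>I. (\<lambda>k. if k = j then 1 else (0::real)) (rec_item alg (Pj \<Delta> j) M r W (fst i) (snd i))) \<in> borel_measurable \<nu>"
    by (intro borel_measurable_sum measurable_compose[OF rec_inI_meas]) auto
  moreover have "cB W = (\<Sum>i\<in>I. (\<lambda>k. if k = j then 1 else (0::real)) (rec_item alg (Pj \<Delta> j) M r W (fst i) (snd i)))" for W
    unfolding cB_def B_def by (simp add: sum.inter_filter[symmetric])
  ultimately show ?thesis by (simp add: fun_eq_iff[symmetric] cong: measurable_cong)
qed

lemma ell_meas: "ell \<in> borel_measurable \<nu>"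
  unfolding ell_def
  by (intro borel_measurable_sum borel_measurable_times c_meas borel_measurable_diff
     borel_measurable_const comp_meas) auto

lemma L_meas: "L \<in> borel_measurable \<nu>"
  using ell_meas by (simp add: L_exp[abs_def])

lemma cA_bound: "0 \<le> cA W" "cA W \<le> real (card I)"
  using card_mono[OF finI A_sub[of W]] by (auto simp: cA_def)
lemma cB_bound: "0 \<le> cB W" "cB W \<le> real (card I)"
  using card_mono[OF finI B_sub[of W]] by (auto simp: cB_def)

end




context core begin

lemma per_r:
  assumes e: "0 < \<epsilon>"
  shows "(\<integral>Z. cB Z \<partial>\<nu>) \<le> (\<integral>W. cA W \<partial>\<nu>) + real (card I) * \<Delta>^2 * (\<integral>W. cA W \<partial>\<nu>) / (8 * \<epsilon>) + real (card I) * \<epsilon>"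
proof -
  interpret nu: prob_space \<nu> by (rule noise_prob)
  define K where "K = real (card I)"
  have Lpos: "0 < L W" for W by (simp add: L_exp)
  have intA: "integrable \<nu> cA"
    by (rule nu.integrable_const_bound[where B=K]) (auto simp: K_def cA_meas cA_bound abs_of_nonneg)
  have intB: "integrable \<nu> cB"
    by (rule nu.integrable_const_bound[where B=K]) (auto simp: K_def cB_meas cB_bound abs_of_nonneg)
  have nnL: "(\<integral>\<^sup>+ W. ennreal (L W) \<partial>\<nu>) = 1"
    using change_measure[of "\<lambda>_. 1"] by (simp add: nu.emeasure_space_1)
  have intL: "integrable \<nu> L"
    by (rule integrableI_nn_integral_finite[where x=1]) (auto simp: L_meas nnL less_imp_le[OF Lpos])
  have iL: "(\<integral>W. L W \<partial>\<nu>) = 1"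
    by (subst integral_eq_nn_integral) (auto simp: L_meas nnL less_imp_le[OF Lpos])
  have nnB: "(\<integral>\<^sup>+ Z. ennreal (cB Z) \<partial>\<nu>) = ennreal (\<integral>Z. cB Z \<partial>\<nu>)"
    by (rule nn_integral_eq_integral[OF intB]) (auto simp: cB_bound)
  have nnAL: "(\<integral>\<^sup>+ W. ennreal (cA W * L W) \<partial>\<nu>) = ennreal (\<integral>Z. cB Z \<partial>\<nu>)"
    using change_measure[of "\<lambda>p. real (card p)"] nnB by (simp add: cA_def cB_def)
  have ALm: "(\<lambda>W. cA W * L W) \<in> borel_measurable \<nu>"
    using cA_meas L_meas by measurable
  have ALnn: "0 \<le> cA W * L W" for W using cA_bound(1)[of W] Lpos[of W] by simp
  have intAL: "integrable \<nu> (\<lambda>W. cA W * L W)"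
    by (rule integrableI_nn_integral_finite[OF ALm _ nnAL]) (simp add: ALnn)
  have iAL: "(\<integral>W. cA W * L W \<partial>\<nu>) = (\<integral>Z. cB Z \<partial>\<nu>)"
    using nnAL ALm ALnn integral_nonneg_AE[of "cB" \<nu>] cB_bound
    by (subst integral_eq_nn_integral) auto
  have intcW: "integrable \<nu> (\<lambda>W. c i W * W i)" if i: "i \<in> I" for i
  proof (rule Bochner_Integration.integrable_bound[OF comp_int[OF i]])
    show "(\<lambda>W. c i W * W i) \<in> borel_measurable \<nu>" using c_meas[OF i] comp_meas[OF i] by measurable
    show "AE W in \<nu>. norm (c i W * W i) \<le> norm (W i)" by (auto simp: c_def)
  qed
  have intS: "integrable \<nu> (\<lambda>W. \<Sum>i\<in>I. c i W * W i)"
    using intcW by (intro Bochner_Integration.integrable_sum) auto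
  have iS: "(\<integral>W. (\<Sum>i\<in>I. c i W * W i) \<partial>\<nu>) = 0"
    using intcW mart by (subst Bochner_Integration.integral_sum) auto
  have intell: "integrable \<nu> ell"
    unfolding ell_alt[abs_def] using intS intA by auto
  have iell: "(\<integral>W. ell W \<partial>\<nu>) = - (\<Delta>^2 / 2) * (\<integral>W. cA W \<partial>\<nu>)"
    unfolding ell_alt[abs_def] using intS intA iS by simp
  define F where "F W = K / 2 * ((L W - 1 - ell W) / (2 * \<epsilon>) + \<epsilon> * (L W + 1) + (L W - 1))" for W
  have pw: "cA W * L W - cA W \<le> F W" for W
    using key_ineq[OF cA_bound(1)[of W] cA_bound(2)[of W, folded K_def] Lpos[of W] e]
    by (simp add: F_def L_exp algebra_simps)
  have F_alt: "F W = (K / 2 * (1 / (2 * \<epsilon>) + \<epsilon> + 1)) * L W + (- K / (4 * \<epsilon>)) * ell W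
      + K / 2 * (\<epsilon> - 1 - 1 / (2 * \<epsilon>))" for W
    using e by (simp add: F_def field_simps)
  have intF: "integrable \<nu> F"
    unfolding F_alt[abs_def] using intL intell by auto
  have iF: "(\<integral>W. F W \<partial>\<nu>) = K / 2 * (\<Delta>^2 * (\<integral>W. cA W \<partial>\<nu>) / (4 * \<epsilon>) + 2 * \<epsilon>)"
  proof -
    have "(\<integral>W. F W \<partial>\<nu>) = (K / 2 * (1 / (2 * \<epsilon>) + \<epsilon> + 1)) * (\<integral>W. L W \<partial>\<nu>) + (- K / (4 * \<epsilon>)) * (\<integral>W. ell W \<partial>\<nu>)
      + K / 2 * (\<epsilon> - 1 - 1 / (2 * \<epsilon>))"
      unfolding F_alt[abs_def] using intL intell by (simp add: nu.prob_space)
    also have "\<dots> = K / 2 * (\<Delta>^2 * (\<integral>W. cA W \<partial>\<nu>) / (4 * \<epsilon>) + 2 * \<epsilon>)"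
      unfolding iL iell using e by (simp add: field_simps)
    finally show ?thesis .
  qed
  have "(\<integral>W. cA W * L W - cA W \<partial>\<nu>) \<le> (\<integral>W. F W \<partial>\<nu>)"
    using intAL intA intF pw by (intro integral_mono) auto
  then have "(\<integral>Z. cB Z \<partial>\<nu>) - (\<integral>W. cA W \<partial>\<nu>) \<le> K / 2 * (\<Delta>^2 * (\<integral>W. cA W \<partial>\<nu>) / (4 * \<epsilon>) + 2 * \<epsilon>)"
    using intAL intA iAL iF by simp
  then show ?thesis using e by (simp add: K_def field_simps)
qed

end




definition cnt :: "algorithm \<Rightarrow> (nat \<Rightarrow> nat \<Rightarrow> real) \<Rightarrow> nat \<Rightarrow> nat \<Rightarrow> real \<Rightarrow> (nat \<times> nat \<Rightarrow> real) \<Rightarrow> nat \<Rightarrow> real" where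
  "cnt alg P M T r Z j = (\<Sum>t<T. \<Sum>u<M. if rec_item alg P M r Z t u = j then 1 else 0)"

context core begin

lemma cnt_sum: "cnt alg P M T r Z j = (\<Sum>i\<in>I. if rec_item alg P M r Z (fst i) (snd i) = j then 1 else 0)"
  unfolding cnt_def I_def by (simp add: sum.cartesian_product case_prod_beta)

lemma cA_cnt: "cA W = cnt alg P0 M T r W j"
  unfolding cA_sum cnt_sum c_def ..

lemma cB_cnt: "cB W = cnt alg (Pj \<Delta> j) M T r W j"
  unfolding cB_def B_def cnt_sum by (simp add: sum.inter_filter[symmetric])

lemma card_I: "card I = T * M" by (simp add: I_def)

lemma per_r':
  assumes e: "0 < \<epsilon>"
  shows "(\<integral>Z. cnt alg (Pj \<Delta> j) M T r Z j \<partial>noise_space T M) \<le> (\<integral>W. cnt alg P0 M T r W j \<partial>noise_space T M)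
     + real (T * M) * \<Delta>^2 * (\<integral>W. cnt alg P0 M T r W j \<partial>noise_space T M) / (8 * \<epsilon>) + real (T * M) * \<epsilon>"
  using per_r[OF e] unfolding cA_cnt[abs_def] cB_cnt[abs_def] card_I .

end

lemma per_r_glob:
  assumes "online_algorithm M N alg" "0 < \<epsilon>"
  shows "(\<integral>Z. cnt alg (Pj \<Delta> j) M T r Z j \<partial>noise_space T M) \<le> (\<integral>W. cnt alg P0 M T r W j \<partial>noise_space T M)
     + real (T * M) * \<Delta>^2 * (\<integral>W. cnt alg P0 M T r W j \<partial>noise_space T M) / (8 * \<epsilon>) + real (T * M) * \<epsilon>"
proof -
  interpret core M N T alg r \<Delta> j by standard (rule assms(1))
  show ?thesis by (rule per_r'[OF assms(2)])
qed

lemma sets_prod_borel: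
  assumes "sets S = sets (borel :: real measure)"
  shows "sets (S \<Otimes>\<^sub>M noise_space T M) = sets (borel \<Otimes>\<^sub>M noise_space T M)"
  using assms by (intro sets_pair_measure_cong) auto

lemma cnt_meas_prod:
  assumes alg: "online_algorithm M N alg" and S: "sets S = sets (borel :: real measure)"
  shows "(\<lambda>x. cnt alg P M T (fst x) (snd x) j) \<in> borel_measurable (S \<Otimes>\<^sub>M noise_space T M)"
proof -
  have "(\<lambda>x. cnt alg P M T (fst x) (snd x) j) \<in> borel_measurable (borel \<Otimes>\<^sub>M noise_space T M)"
    unfolding cnt_def
    by (intro borel_measurable_sum measurable_compose[OF rec_meas[OF alg], where g="\<lambda>k. if k = j then 1 else (0::real)"]) auto
  then show ?thesis
    by (subst measurable_cong_sets[OF sets_prod_borel[OF S] refl])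
qed

lemma cnt_meas_r:
  assumes alg: "online_algorithm M N alg"
  shows "(\<lambda>W. cnt alg P M T r W j) \<in> borel_measurable (noise_space T M)"
  unfolding cnt_def
  by (intro borel_measurable_sum measurable_compose[OF rec_meas_r[OF alg], where g="\<lambda>k. if k = j then 1 else (0::real)"]) auto

lemma cnt_bound: "0 \<le> cnt alg P M T r Z j" "cnt alg P M T r Z j \<le> real (T * M)"
proof -
  show "0 \<le> cnt alg P M T r Z j" unfolding cnt_def by (intro sum_nonneg) auto
  have "cnt alg P M T r Z j \<le> (\<Sum>t<T. \<Sum>u<M. (1::real))"
    unfolding cnt_def by (intro sum_mono) auto
  then show "cnt alg P M T r Z j \<le> real (T * M)" by simp
qed

lemma fubini_cnt:
  assumes alg: "online_algorithm M N alg" and S: "sets S = sets (borel :: real measure)" "prob_space S"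
  shows "integrable (S \<Otimes>\<^sub>M noise_space T M) (\<lambda>x. cnt alg P M T (fst x) (snd x) j)"
    and "integrable S (\<lambda>r. \<integral>W. cnt alg P M T r W j \<partial>noise_space T M)"
    and "(\<integral>x. cnt alg P M T (fst x) (snd x) j \<partial>(S \<Otimes>\<^sub>M noise_space T M)) =
         (\<integral>r. (\<integral>W. cnt alg P M T r W j \<partial>noise_space T M) \<partial>S)"
proof -
  interpret S: prob_space S by fact
  interpret N: prob_space "noise_space T M" by (rule noise_prob)
  interpret SN2: pair_prob_space S "noise_space T M" ..
  show int: "integrable (S \<Otimes>\<^sub>M noise_space T M) (\<lambda>x. cnt alg P M T (fst x) (snd x) j)"
    by (rule SN2.P.integrable_const_bound[where B="real (T * M)"])
       (auto simp: cnt_meas_prod[OF alg S(1)] cnt_bound abs_of_nonneg intro!: AE_I2 order.trans[OF cnt_bound(2)])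
  show "integrable S (\<lambda>r. \<integral>W. cnt alg P M T r W j \<partial>noise_space T M)"
    using SN2.integrable_fst'[OF int] by simp
  show "(\<integral>x. cnt alg P M T (fst x) (snd x) j \<partial>(S \<Otimes>\<^sub>M noise_space T M)) =
         (\<integral>r. (\<integral>W. cnt alg P M T r W j \<partial>noise_space T M) \<partial>S)"
    using SN2.integral_fst'[OF int] by simp
qed

lemma noise_comp_int:
  assumes "t < T" "u < M"
  shows "integrable (noise_space T M) (\<lambda>W. W (t, u))" "(\<integral>W. W (t, u) \<partial>noise_space T M) = 0"
proof -
  have i: "(t, u) \<in> {..<T} \<times> {..<M}" using assms by auto
  have d: "distr (noise_space T M) SN (\<lambda>W. W (t, u)) = SN"
    unfolding noise_space_def using i by (intro distr_PiM_component) (auto intro: SN_prob)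
  have cm: "(\<lambda>W. W (t, u)) \<in> noise_space T M \<rightarrow>\<^sub>M SN"
    unfolding noise_space_def using i by (rule measurable_component_singleton)
  have "integrable SN (\<lambda>x::real. x)"
    using integrable_std_normal_distribution_moment[of 1] by simp
  then have "integrable (distr (noise_space T M) SN (\<lambda>W. W (t, u))) (\<lambda>x::real. x)" by (simp only: d)
  then show "integrable (noise_space T M) (\<lambda>W. W (t, u))"
    by (subst (asm) integrable_distr_eq[OF cm]) auto
  have "(\<integral>W. W (t, u) \<partial>noise_space T M) = (\<integral>x. x \<partial>distr (noise_space T M) SN (\<lambda>W. W (t, u)))"
    by (rule integral_distr[OF cm, symmetric]) auto
  also have "\<dots> = (\<integral>x. x^1 \<partial>SN)" by (simp only: d) simp
  also have "\<dots> = 0" by (rule integral_std_normal_distribution_moment_odd) simp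
  finally show "(\<integral>W. W (t, u) \<partial>noise_space T M) = 0" .
qed

lemma noise_int_prod:
  assumes S: "prob_space S" "sets S = sets (borel :: real measure)" and tu: "t < T" "u < M"
  shows "integrable (S \<Otimes>\<^sub>M noise_space T M) (\<lambda>x. snd x (t, u))"
    "(\<integral>x. snd x (t, u) \<partial>(S \<Otimes>\<^sub>M noise_space T M)) = 0"
proof -
  interpret S: prob_space S by fact
  interpret N: prob_space "noise_space T M" by (rule noise_prob)
  interpret SN2: pair_prob_space S "noise_space T M" ..
  have cm: "(\<lambda>W. W (t, u)) \<in> borel_measurable (noise_space T M)"
    using integrable_iff_bounded noise_comp_int(1)[OF tu] by blast
  have m: "(\<lambda>x. snd x (t, u)) \<in> borel_measurable (S \<Otimes>\<^sub>M noise_space T M)"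
    by (rule measurable_compose[OF measurable_snd cm])
  have "(\<integral>\<^sup>+ x. ennreal (norm (snd x (t, u))) \<partial>(S \<Otimes>\<^sub>M noise_space T M)) =
     (\<integral>\<^sup>+ r. (\<integral>\<^sup>+ W. ennreal (norm (W (t, u))) \<partial>noise_space T M) \<partial>S)"
  proof -
    have m': "(\<lambda>x. ennreal (norm (snd x (t, u)))) \<in> borel_measurable (S \<Otimes>\<^sub>M noise_space T M)"
      using m by measurable
    show ?thesis using N.nn_integral_fst[OF m'] by simp
  qed
  also have "\<dots> = (\<integral>\<^sup>+ W. ennreal (norm (W (t, u))) \<partial>noise_space T M)"
    by (simp add: S.emeasure_space_1)
  also have "\<dots> < \<infinity>"
    using noise_comp_int(1)[OF tu] by (simp add: integrable_iff_bounded)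
  finally show int: "integrable (S \<Otimes>\<^sub>M noise_space T M) (\<lambda>x. snd x (t, u))"
    using m by (simp add: integrable_iff_bounded)
  have "(\<integral>x. snd x (t, u) \<partial>(S \<Otimes>\<^sub>M noise_space T M)) = (\<integral>r. (\<integral>W. W (t, u) \<partial>noise_space T M) \<partial>S)"
    using SN2.integral_fst'[OF int] by simp
  also have "\<dots> = 0" using noise_comp_int(2)[OF tu] by simp
  finally show "(\<integral>x. snd x (t, u) \<partial>(S \<Otimes>\<^sub>M noise_space T M)) = 0" .
qed




lemma integrand_eq:
  assumes "M \<ge> 1"
  shows "(\<Sum>t<T. (1 / real M) * (\<Sum>u<M. Pj \<Delta> j u (rec_item alg (Pj \<Delta> j) M r Z t u) + Z (t, u))) =
     real T / 2 + \<Delta> / real M * cnt alg (Pj \<Delta> j) M T r Z j + 1 / real M * (\<Sum>t<T. \<Sum>u<M. Z (t, u))"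
proof -
  have inner: "(\<Sum>u<M. Pj \<Delta> j u (rec_item alg (Pj \<Delta> j) M r Z t u) + Z (t, u)) =
      real M / 2 + \<Delta> * (\<Sum>u<M. if rec_item alg (Pj \<Delta> j) M r Z t u = j then 1 else 0) + (\<Sum>u<M. Z (t, u))" for t
  proof -
    have "(\<Sum>u<M. Pj \<Delta> j u (rec_item alg (Pj \<Delta> j) M r Z t u) + Z (t, u)) =
       (\<Sum>u<M. 1/2 + \<Delta> * (if rec_item alg (Pj \<Delta> j) M r Z t u = j then 1 else 0) + Z (t, u))"
      by (intro sum.cong) (auto simp: Pj_def)
    also have "\<dots> = real M / 2 + \<Delta> * (\<Sum>u<M. if rec_item alg (Pj \<Delta> j) M r Z t u = j then 1 else 0) + (\<Sum>u<M. Z (t, u))"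
      by (simp add: sum.distrib sum_distrib_left)
    finally show ?thesis .
  qed
  have M0: "real M \<noteq> 0" using assms by simp
  have gen: "(\<Sum>t<T. (1 / real M) * (real M / 2 + \<Delta> * a t + b t)) =
     real T / 2 + \<Delta> / real M * (\<Sum>t<T. a t) + 1 / real M * (\<Sum>t<T. b t)" for a b :: "nat \<Rightarrow> real"
  proof -
    have "(\<Sum>t<T. (1 / real M) * (real M / 2 + \<Delta> * a t + b t)) = (\<Sum>t<T. 1/2 + \<Delta> / real M * a t + 1 / real M * b t)"
      using M0 by (intro sum.cong refl) (simp add: field_simps)
    also have "\<dots> = real T / 2 + \<Delta> / real M * (\<Sum>t<T. a t) + 1 / real M * (\<Sum>t<T. b t)"
      by (simp add: sum.distrib sum_distrib_left)
    finally show ?thesis .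
  qed
  show ?thesis
    unfolding inner cnt_def by (rule gen)
qed

lemma sum_cnt:
  assumes alg: "online_algorithm M N alg"
  shows "(\<Sum>j<N. cnt alg P M T r Z j) = real (T * M)"
proof -
  have "(\<Sum>j<N. cnt alg P M T r Z j) = (\<Sum>t<T. \<Sum>u<M. \<Sum>j<N. if rec_item alg P M r Z t u = j then 1 else (0::real))"
  proof -
    define F where "F t u j = (if rec_item alg P M r Z t u = j then 1 else (0::real))" for t u j
    have "(\<Sum>j<N. \<Sum>t<T. \<Sum>u<M. F t u j) = (\<Sum>t<T. \<Sum>j<N. \<Sum>u<M. F t u j)"
      by (rule sum.swap)
    also have "\<dots> = (\<Sum>t<T. \<Sum>u<M. \<Sum>j<N. F t u j)"
      by (intro sum.cong refl sum.swap)
    finally show ?thesis unfolding cnt_def F_def .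
  qed
  also have "\<dots> = (\<Sum>t<T. \<Sum>u<M. (1::real))"
  proof (intro sum.cong refl)
    fix t u assume "u \<in> {..<M}"
    then have "rec_item alg P M r Z t u < N" using alg by (auto simp: online_algorithm_def rec_item_def)
    then show "(\<Sum>j<N. if rec_item alg P M r Z t u = j then 1 else (0::real)) = 1"
      by (simp add: sum.delta)
  qed
  finally show ?thesis by simp
qed

lemma Max_Pj:
  assumes "j < N" "0 \<le> \<Delta>"
  shows "Max (Pj \<Delta> j u ` {..<N}) = 1/2 + \<Delta>"
proof (rule Max_eqI)
  show "finite (Pj \<Delta> j u ` {..<N})" by simp
  show "y \<le> 1/2 + \<Delta>" if "y \<in> Pj \<Delta> j u ` {..<N}" for y using that assms by (auto simp: Pj_def)
  show "1/2 + \<Delta> \<in> Pj \<Delta> j u ` {..<N}" using assms by (auto simp: Pj_def image_iff intro!: bexI[of _ j])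
qed

theorem theorem4:
  shows "\<exists>c > (0::real). \<forall>M N T :: nat.
     M \<ge> 1 \<and> N \<ge> 2 \<and> T \<ge> 1 \<and> M * T \<ge> N - 1 \<longrightarrow>
     (\<forall>alg S. online_algorithm M N alg \<and> prob_space S \<and> sets S = sets (borel :: real measure) \<longrightarrow>
        (\<exists>P :: nat \<Rightarrow> nat \<Rightarrow> real.
            (\<forall>i<M. \<forall>j<N. 0 \<le> P i j \<and> P i j \<le> 1) \<and>
            vec_space.rank M (to_mat M N P) \<le> 1 \<and>
            regret alg S P M N T \<ge> c * sqrt (real N * real T / real M)))"
proof (intro exI[of _ "1/16"] conjI allI impI)
  show "(0::real) < 1/16" by simp
  fix M N T :: nat and alg :: algorithm and S :: "real measure"
  assume H: "M \<ge> 1 \<and> N \<ge> 2 \<and> T \<ge> 1 \<and> M * T \<ge> N - 1"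
  assume H2: "online_algorithm M N alg \<and> prob_space S \<and> sets S = sets (borel :: real measure)"
  have M1: "M \<ge> 1" and N2: "N \<ge> 2" and T1: "T \<ge> 1" and MT: "M * T \<ge> N - 1" using H by auto
  have alg: "online_algorithm M N alg" and SP: "prob_space S" and Sb: "sets S = sets (borel :: real measure)"
    using H2 by auto
  interpret S: prob_space S by (rule SP)
  interpret Nu: prob_space "noise_space T M" by (rule noise_prob)
  interpret SN2: pair_prob_space S "noise_space T M" ..
  define K where "K = real (T * M)"
  have K1: "K \<ge> 1"
  proof -
    have "1 \<le> T * M" using M1 T1 by (simp add: Suc_le_eq)
    then show ?thesis unfolding K_def by linarith
  qed
  have NK: "real N \<le> 2 * K"
  proof -
    have "N \<le> M * T + 1" using MT by linarith
    then have "real N \<le> real (M * T + 1)" by linarith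
    then have "real N \<le> K + 1" by (simp add: K_def mult.commute)
    then show ?thesis using K1 by linarith
  qed
  define \<Delta> where "\<Delta> = sqrt (real N / (16 * K))"
  have arg0: "0 \<le> real N / (16 * K)" using K1 by simp
  have D0: "0 \<le> \<Delta>" unfolding \<Delta>_def using arg0 by (rule real_sqrt_ge_zero)
  have D2: "\<Delta>^2 = real N / (16 * K)" unfolding \<Delta>_def using arg0 by (rule real_sqrt_pow2)
  have KD2: "K * \<Delta>^2 = real N / 16" unfolding D2 using K1 by (simp add: field_simps)
  have Dhalf: "\<Delta> \<le> 1/2"
  proof -
    have "real N / (16 * K) \<le> (1/2)^2"
    proof (subst pos_divide_le_eq)
      show "0 < 16 * K" using K1 by simp
      have "(1/2::real)^2 * (16*K) = 4*K" by (simp add: power2_eq_square)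
      then show "real N \<le> (1/2)^2 * (16 * K)" using NK K1 by linarith
    qed
    then have "\<Delta>^2 \<le> (1/2)^2" unfolding D2 .
    then show ?thesis by (rule power2_le_imp_le) simp
  qed
  define EA where "EA j = (\<integral>x. cnt alg P0 M T (fst x) (snd x) j \<partial>(S \<Otimes>\<^sub>M noise_space T M))" for j
  have PP: "prob_space (S \<Otimes>\<^sub>M noise_space T M)"
    by (rule prob_space_pair) (rule SP, rule noise_prob)
  have sumEA: "(\<Sum>j<N. EA j) = K"
  proof -
    have "(\<Sum>j<N. EA j) = (\<integral>x. (\<Sum>j<N. cnt alg P0 M T (fst x) (snd x) j) \<partial>(S \<Otimes>\<^sub>M noise_space T M))"
      unfolding EA_def by (rule Bochner_Integration.integral_sum[symmetric]) (rule fubini_cnt(1)[OF alg Sb SP])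
    also have "\<dots> = (\<integral>x. K \<partial>(S \<Otimes>\<^sub>M noise_space T M))"
      by (simp add: sum_cnt[OF alg] K_def)
    also have "\<dots> = K" using prob_space.prob_space[OF PP] by simp
    finally show ?thesis .
  qed
  obtain j where j: "j < N" "EA j \<le> K / real N"
  proof (rule ccontr)
    assume "\<not> thesis"
    with that have gt: "\<And>j. j < N \<Longrightarrow> K / real N < EA j" by force
    have "(\<Sum>j<N. K / real N) < (\<Sum>j<N. EA j)"
      using N2 by (intro sum_strict_mono) (auto intro: gt simp: lessThan_empty_iff)
    also have "(\<Sum>j<N. K / real N) = K" using N2 by simp
    finally show False using sumEA by simp
  qed
  define EB where "EB = (\<integral>x. cnt alg (Pj \<Delta> j) M T (fst x) (snd x) j \<partial>(S \<Otimes>\<^sub>M noise_space T M))"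
  have EB_bound: "EB \<le> EA j + K * \<Delta>^2 * EA j / (8 * (1/8)) + K * (1/8)"
  proof -
    define fA where "fA r = (\<integral>W. cnt alg P0 M T r W j \<partial>noise_space T M)" for r
    define fB where "fB r = (\<integral>W. cnt alg (Pj \<Delta> j) M T r W j \<partial>noise_space T M)" for r
    have iA: "integrable S fA" unfolding fA_def by (rule fubini_cnt(2)[OF alg Sb SP])
    have iB: "integrable S fB" unfolding fB_def by (rule fubini_cnt(2)[OF alg Sb SP])
    have EAe: "EA j = (\<integral>r. fA r \<partial>S)" unfolding EA_def fA_def by (rule fubini_cnt(3)[OF alg Sb SP])
    have EBe: "EB = (\<integral>r. fB r \<partial>S)" unfolding EB_def fB_def by (rule fubini_cnt(3)[OF alg Sb SP])
    have pw: "fB r \<le> fA r + K * \<Delta>^2 * fA r / (8 * (1/8)) + K * (1/8)" for r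
      unfolding fA_def fB_def K_def by (rule per_r_glob[OF alg]) simp
    have "(\<integral>r. fB r \<partial>S) \<le> (\<integral>r. fA r + K * \<Delta>^2 * fA r / (8 * (1/8)) + K * (1/8) \<partial>S)"
      using iA iB pw by (intro integral_mono) auto
    also have "\<dots> = (\<integral>r. fA r \<partial>S) + K * \<Delta>^2 * (\<integral>r. fA r \<partial>S) / (8 * (1/8)) + K * (1/8)"
      using iA by (simp add: S.prob_space)
    finally show ?thesis unfolding EAe EBe .
  qed
  have reg: "regret alg S (Pj \<Delta> j) M N T = real T * \<Delta> - \<Delta> / real M * EB"
  proof -
    have M0: "real M \<noteq> 0" using M1 by simp
    have first: "real T / real M * (\<Sum>u<M. Max (Pj \<Delta> j u ` {..<N})) = real T * (1/2 + \<Delta>)"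
      using Max_Pj[OF j(1) D0] M0 by simp
    define G where "G x = real T / 2 + \<Delta> / real M * cnt alg (Pj \<Delta> j) M T (fst x) (snd x) j
       + 1 / real M * (\<Sum>t<T. \<Sum>u<M. snd x (t, u))" for x :: "real \<times> (nat \<times> nat \<Rightarrow> real)"
    have cong: "(case x of (r, Z) \<Rightarrow>
          (\<Sum>t<T. (1 / real M) * (\<Sum>u<M. Pj \<Delta> j u (rec_item alg (Pj \<Delta> j) M r Z t u) + Z (t, u)))) = G x" for x
      unfolding G_def by (cases x) (simp only: prod.case integrand_eq[OF M1] fst_conv snd_conv)
    have intC: "integrable (S \<Otimes>\<^sub>M noise_space T M) (\<lambda>x. cnt alg (Pj \<Delta> j) M T (fst x) (snd x) j)"
      by (rule fubini_cnt(1)[OF alg Sb SP])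
    have intZ: "integrable (S \<Otimes>\<^sub>M noise_space T M) (\<lambda>x. \<Sum>t<T. \<Sum>u<M. snd x (t, u))"
      using noise_int_prod(1)[OF SP Sb] by (intro Bochner_Integration.integrable_sum) auto
    have iZ: "(\<integral>x. (\<Sum>t<T. \<Sum>u<M. snd x (t, u)) \<partial>(S \<Otimes>\<^sub>M noise_space T M)) = 0"
    proof -
      have "(\<integral>x. (\<Sum>t<T. \<Sum>u<M. snd x (t, u)) \<partial>(S \<Otimes>\<^sub>M noise_space T M)) =
          (\<Sum>t<T. (\<integral>x. (\<Sum>u<M. snd x (t, u)) \<partial>(S \<Otimes>\<^sub>M noise_space T M)))"
        using noise_int_prod(1)[OF SP Sb]
        by (intro Bochner_Integration.integral_sum Bochner_Integration.integrable_sum) auto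
      also have "\<dots> = (\<Sum>t<T. \<Sum>u<M. (\<integral>x. snd x (t, u) \<partial>(S \<Otimes>\<^sub>M noise_space T M)))"
        using noise_int_prod(1)[OF SP Sb]
        by (intro sum.cong refl Bochner_Integration.integral_sum) auto
      also have "\<dots> = 0" using noise_int_prod(2)[OF SP Sb] by simp
      finally show ?thesis .
    qed
    have "(\<integral>x. G x \<partial>(S \<Otimes>\<^sub>M noise_space T M)) = real T / 2 + \<Delta> / real M * EB + 1 / real M * 0"
      unfolding G_def EB_def using intC intZ iZ prob_space.prob_space[OF PP] by simp
    then have "(\<integral>x. G x \<partial>(S \<Otimes>\<^sub>M noise_space T M)) = real T / 2 + \<Delta> / real M * EB" by simp
    then show ?thesis
      unfolding regret_def first cong by (simp add: algebra_simps)
  qed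
  have TD: "real T * \<Delta> = sqrt (real N * real T / real M) / 4"
  proof -
    have T0: "0 \<le> real T" by simp
    have "real T * \<Delta> = sqrt ((real T)^2) * sqrt (real N / (16 * K))" by (simp only: \<Delta>_def real_sqrt_abs abs_of_nonneg[OF T0])
    also have "\<dots> = sqrt ((real T)^2 * (real N / (16 * K)))" by (rule real_sqrt_mult[symmetric])
    also have "(real T)^2 * (real N / (16 * K)) = (real N * real T / real M) / 16"
      using M1 T1 unfolding K_def by (simp add: field_simps power2_eq_square)
    also have "sqrt ((real N * real T / real M) / 16) = sqrt (real N * real T / real M) / 4"
    proof -
      have s16: "sqrt (16::real) = 4" by (rule real_sqrt_unique) auto
      show ?thesis by (simp only: real_sqrt_divide s16)
    qed
    finally show ?thesis .
  qed
  show "\<exists>P :: nat \<Rightarrow> nat \<Rightarrow> real.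
            (\<forall>i<M. \<forall>j<N. 0 \<le> P i j \<and> P i j \<le> 1) \<and>
            vec_space.rank M (to_mat M N P) \<le> 1 \<and>
            regret alg S P M N T \<ge> 1/16 * sqrt (real N * real T / real M)"
  proof (intro exI[of _ "Pj \<Delta> j"] conjI allI impI)
    show "0 \<le> Pj \<Delta> j u k" for u k using D0 by (simp add: Pj_def)
    show "Pj \<Delta> j u k \<le> 1" for u k using Dhalf by (simp add: Pj_def)
    show "vec_space.rank M (to_mat M N (Pj \<Delta> j)) \<le> 1" by (rule rank_Pj)
    show "1/16 * sqrt (real N * real T / real M) \<le> regret alg S (Pj \<Delta> j) M N T"
    proof -
      have Npos: "0 < real N" using N2 by simp
      have EB2: "EB \<le> EA j * (1 + real N / 16) + K / 8"
        using EB_bound KD2 by (simp add: algebra_simps)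
      have "EA j * (1 + real N / 16) \<le> K / real N * (1 + real N / 16)"
        using j(2) Npos by (intro mult_right_mono) auto
      also have "\<dots> = K / real N + K / 16" using Npos by (simp add: field_simps)
      also have "K / real N \<le> K / 2" using N2 K1 by (intro divide_left_mono) auto
      finally have EB3: "EB \<le> 11 / 16 * K" using EB2 by simp
      have "\<Delta> / real M * EB \<le> \<Delta> / real M * (11 / 16 * K)"
        using EB3 D0 by (intro mult_left_mono) auto
      also have "\<Delta> / real M * (11 / 16 * K) = 11 / 16 * (real T * \<Delta>)"
        using M1 unfolding K_def by (simp add: field_simps)
      finally have "regret alg S (Pj \<Delta> j) M N T \<ge> 5 / 16 * (real T * \<Delta>)" unfolding reg by (simp add: mult.commute)
      moreover have "5 / 16 * (real T * \<Delta>) \<ge> 1/16 * sqrt (real N * real T / real M)"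
        unfolding TD by simp
      ultimately show ?thesis by linarith
    qed
  qed
qed



end
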